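(* Let $\mathbf A\in\mathbb R^{m\times n}$ be a nonzero matrix with rank $r$ and nonzero singular values $\sigma_1(\mathbf A)\ge\cdots\ge\sigma_r(\mathbf A)>0$, and let $\mathbf b\in\mathbb R^m$ be arbitrary (the system $\mathbf A\mathbf x=\mathbf b$ may be consistent or inconsistent). Fix any row partition, any column partition, any step size $\alpha>0$, and any initial vector $\mathbf x^0\in\mathbb R^n$, and let $\mathbf x^k$ denote the $k$th iterate of the doubly stochastic block Gauss--Seidel (DSBGS) algorithm described in the context. Let $\mathbf x_\star$ be any solution of the normal equations $\mathbf A^T\mathbf A\mathbf x=\mathbf A^T\mathbf b$. Then for every $k\ge0$, $$\big\|\mathbb E[\mathbf A\mathbf x^k-\mathbf A\mathbf x_\star]\big\|_2\le\Big(\max_{1\le i\le r}\Big|1-\frac{\alpha\sigma_i^2(\mathbf A)}{\|\mathbf A\|_F^2}\Big|\Big)^k\|\mathbf A\mathbf x^0-\mathbf A\mathbf x_\star\|_2 .$$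
   Context: Notation: $\|\cdot\|_F$ the Frobenius norm, $\|\cdot\|_2$ the Euclidean norm. For $\mathcal I\subseteq[m]=\{1,\dots,m\}$ and $\mathcal J\subseteq[n]$, $\mathbf A_{\mathcal I,\mathcal J}$ is the submatrix of $\mathbf A$ with rows indexed by $\mathcal I$ and columns indexed by $\mathcal J$; $\mathbf I_{:,\mathcal J}$ denotes the columns of the identity matrix (of the appropriate order) indexed by $\mathcal J$. DSBGS algorithm: Let $\{\mathcal I_1,\dots,\mathcal I_s\}$ be a partition of $[m]$ into nonempty pairwise disjoint sets and $\{\mathcal J_1,\dots,\mathcal J_t\}$ a partition of $[n]$ into nonempty pairwise disjoint sets; let $\mathcal P=\{\mathcal I_1,\dots,\mathcal I_s\}\times\{\mathcal J_1,\dots,\mathcal J_t\}$. Given $\alpha>0$ and $\mathbf x^0\in\mathbb R^n$, for $k=1,2,\dots$: pick $(\mathcal I,\mathcal J)\in\mathcal P$ (independently of the previous choices) with probability $\|\mathbf A_{\mathcal I,\mathcal J}\|_F^2/\|\mathbf A\|_F^2$, and set $$\mathbf x^k=\mathbf x^{k-1}-\alpha\,\frac{\mathbf I_{:,\mathcal J}(\mathbf A_{\mathcal I,\mathcal J})^{T}(\mathbf I_{:,\mathcal I})^{T}}{\|\mathbf A_{\mathcal I,\mathcal J}\|_F^2}\,(\mathbf A\mathbf x^{k-1}-\mathbf b).$$ The expectation $\mathbb E$ is over the random choices of the blocks. *)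

theory Defs
  imports "HOL-Analysis.Analysis"
begin

(* eigenvalue of a real square matrix *)
definition mat_eigenvalue :: "real^'n^'n \<Rightarrow> real \<Rightarrow> bool" where
  "mat_eigenvalue M c \<longleftrightarrow> (\<exists>v. v \<noteq> 0 \<and> M *v v = c *\<^sub>R v)"

(* nonzero singular values of A: sigma > 0 with sigma^2 an eigenvalue of A^T A *)
definition nonzero_singular_values :: "real^'n^'m \<Rightarrow> real set" where
  "nonzero_singular_values A = {\<sigma>. \<sigma> > 0 \<and> mat_eigenvalue (transpose A ** A) (\<sigma>\<^sup>2)}"

(* squared Frobenius norm of the submatrix A_{I,J} *)
definition frob_sq_block :: "real^'n^'m \<Rightarrow> 'm set \<Rightarrow> 'n set \<Rightarrow> real" where
  "frob_sq_block A I J = (\<Sum>i\<in>I. \<Sum>j\<in>J. (A $ i $ j)\<^sup>2)"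

definition frob_sq :: "real^'n^'m \<Rightarrow> real" where
  "frob_sq A = frob_sq_block A UNIV UNIV"

(* partition of a finite type's index set into nonempty pairwise disjoint sets *)
definition is_partition :: "'a set set \<Rightarrow> bool" where
  "is_partition P \<longleftrightarrow> {} \<notin> P \<and> \<Union>P = UNIV \<and>
     (\<forall>X\<in>P. \<forall>Y\<in>P. X \<noteq> Y \<longrightarrow> X \<inter> Y = {})"

(* one DSBGS step with chosen block (I,J):
   x - alpha * I_{:,J} (A_{I,J})^T (I_{:,I})^T (A x - b) / ||A_{I,J}||_F^2 *)
definition dsbgs_step :: "real \<Rightarrow> real^'n^'m \<Rightarrow> real^'m \<Rightarrow> real^'n \<Rightarrow> 'm set \<times> 'n set \<Rightarrow> real^'n" where
  "dsbgs_step \<alpha> A b x IJ =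
     (let I = fst IJ; J = snd IJ; r = A *v x - b in
      x - (\<alpha> / frob_sq_block A I J) *\<^sub>R
        (\<chi> j. if j \<in> J then (\<Sum>i\<in>I. A $ i $ j * r $ i) else 0))"

(* iterate after the sequence of block choices ss (ss ! 0 is the first choice) *)
definition dsbgs_iter :: "real \<Rightarrow> real^'n^'m \<Rightarrow> real^'m \<Rightarrow> real^'n \<Rightarrow> ('m set \<times> 'n set) list \<Rightarrow> real^'n" where
  "dsbgs_iter \<alpha> A b x0 ss = foldl (dsbgs_step \<alpha> A b) x0 ss"

(* probability of choosing block (I,J) *)
definition block_prob :: "real^'n^'m \<Rightarrow> 'm set \<times> 'n set \<Rightarrow> real" where
  "block_prob A IJ = frob_sq_block A (fst IJ) (snd IJ) / frob_sq A"

(* expectation of x^k over k independent block choices from P = Rows x Cols *)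
definition dsbgs_expect ::
  "'m set set \<Rightarrow> 'n set set \<Rightarrow> real \<Rightarrow> real^'n^'m \<Rightarrow> real^'m \<Rightarrow> real^'n \<Rightarrow> nat \<Rightarrow> real^'n" where
  "dsbgs_expect Rows Cols \<alpha> A b x0 k =
     (\<Sum>ss\<in>{ss. set ss \<subseteq> Rows \<times> Cols \<and> length ss = k}.
        (\<Prod>p\<leftarrow>ss. block_prob A p) *\<^sub>R dsbgs_iter \<alpha> A b x0 ss)"

end

theory Submission
  imports Defs
begin

lemma eig_indep:
  fixes M :: "real^'n^'n"
  assumes "finite S" "\<forall>c\<in>S. v c \<noteq> 0 \<and> M *v v c = c *\<^sub>R v c"
    "(\<Sum>c\<in>S. a c *\<^sub>R v c) = 0"
  shows "\<forall>c\<in>S. a c = 0"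
  using assms
proof (induction S arbitrary: a rule: finite_induct)
  case empty then show ?case by simp
next
  case (insert d S)
  have e: "a d *\<^sub>R v d + (\<Sum>c\<in>S. a c *\<^sub>R v c) = 0" using insert by simp
  have "M *v (a d *\<^sub>R v d + (\<Sum>c\<in>S. a c *\<^sub>R v c)) = 0" using e by simp
  then have e2: "a d *\<^sub>R d *\<^sub>R v d + (\<Sum>c\<in>S. a c *\<^sub>R c *\<^sub>R v c) = 0"
    using insert.prems(1) by (simp add: vec.add vec.sum matrix_vector_mult_scaleR)
  have "(\<Sum>c\<in>S. (a c * (c - d)) *\<^sub>R v c) = (a d *\<^sub>R d *\<^sub>R v d + (\<Sum>c\<in>S. a c *\<^sub>R c *\<^sub>R v c)) - d *\<^sub>R (a d *\<^sub>R v d + (\<Sum>c\<in>S. a c *\<^sub>R v c))"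
    by (simp add: algebra_simps scaleR_sum_right sum_subtractf)
  also have "\<dots> = 0" using e e2 by simp
  finally have "\<forall>c\<in>S. a c * (c - d) = 0" using insert by (intro insert.IH) auto
  then have S0: "\<forall>c\<in>S. a c = 0" using insert.hyps(2) by auto
  then have "a d *\<^sub>R v d = 0" using e by simp
  then have "a d = 0" using insert.prems(1) by simp
  then show ?case using S0 by simp
qed

lemma eig_finite: "finite {c. mat_eigenvalue (M::real^'n^'n) c}"
proof (rule ccontr)
  let ?E = "{c. mat_eigenvalue M c}"
  assume inf: "infinite ?E"
  define v where "v c = (SOME v. v \<noteq> 0 \<and> M *v v = c *\<^sub>R v)" for c
  have vE: "v c \<noteq> 0 \<and> M *v v c = c *\<^sub>R v c" if "c \<in> ?E" for c
    using that unfolding v_def mat_eigenvalue_def by (metis (mono_tags, lifting) mem_Collect_eq someI_ex)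
  obtain S where S: "S \<subseteq> ?E" "finite S" "card S = Suc DIM(real^'n)"
    using infinite_arbitrarily_large[OF inf] by blast
  have inj: "inj_on v S"
  proof (rule inj_onI)
    fix c d assume "c \<in> S" "d \<in> S" "v c = v d"
    then have "c *\<^sub>R v c = d *\<^sub>R v c" "v c \<noteq> 0" using vE S(1) by (metis subsetD)+
    then show "c = d" by simp
  qed
  have "independent (v ` S)"
  proof
    assume "dependent (v ` S)"
    then obtain T u where T: "finite T" "T \<subseteq> v ` S" "(\<Sum>v\<in>T. u v *\<^sub>R v) = 0" "\<exists>c\<in>T. u c \<noteq> 0"
      unfolding dependent_explicit by blast
    obtain S' where S': "S' \<subseteq> S" "T = v ` S'" using T(2) subset_image_iff by metis
    have fS': "finite S'" using S' S(2) finite_subset by blast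
    have "(\<Sum>x\<in>S'. (u (v x)) *\<^sub>R v x) = 0"
      using T(3) S' sum.reindex[of v S' "\<lambda>w. u w *\<^sub>R w"] inj_on_subset[OF inj S'(1)] by simp
    then have "\<forall>x\<in>S'. u (v x) = 0"
      using eig_indep[of S' v M "\<lambda>x. u (v x)"] fS' vE S' S(1) by blast
    then show False using T S' by auto
  qed
  then have "card (v ` S) \<le> DIM(real^'n)" using independent_bound by blast
  then show False using S(3) card_image[OF inj] by simp
qed


lemma adj: "(A *v x) \<bullet> (y::real^'m) = (x::real^'n) \<bullet> (transpose A *v y)"
proof -
  have "(A *v x) \<bullet> y = (\<Sum>i\<in>UNIV. (A *v x) $ i * y $ i)"
    unfolding inner_vec_def by simp
  also have "\<dots> = (\<Sum>i\<in>UNIV. \<Sum>j\<in>UNIV. A $ i $ j * x $ j * y $ i)"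
    unfolding matrix_vector_mult_def by (simp add: sum_distrib_right)
  also have "\<dots> = (\<Sum>j\<in>UNIV. \<Sum>i\<in>UNIV. A $ i $ j * x $ j * y $ i)" by (rule sum.swap)
  also have "\<dots> = (\<Sum>j\<in>UNIV. x $ j * (transpose A *v y) $ j)"
    unfolding matrix_vector_mult_def transpose_def by (simp add: sum_distrib_left mult_ac)
  also have "\<dots> = x \<bullet> (transpose A *v y)"
    unfolding inner_vec_def by simp
  finally show ?thesis .
qed

lemma quad0: assumes "\<forall>t::real. 0 \<le> t * a + t^2 * b" shows "a = 0"
proof (rule ccontr)
  assume a: "a \<noteq> 0"
  define B where "B = \<bar>b\<bar> + 1"
  have p: "B > 0" "b - B < 0" unfolding B_def using abs_ge_self[of b] by linarith+
  define t where "t = - a / B"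
  have tB: "t * B = - a" unfolding t_def using p by simp
  have "0 \<le> t * a + t^2 * b" using assms by blast
  then have "0 \<le> (t * a + t^2 * b) * B^2" by simp
  also have "(t * a + t^2 * b) * B^2 = (t * B) * a * B + (t * B)^2 * b"
    by (simp add: power2_eq_square algebra_simps)
  also have "\<dots> = a^2 * (b - B)" unfolding tB by (simp add: power2_eq_square algebra_simps)
  also have "\<dots> < 0" using a p(2) by (simp add: mult_pos_neg)
  finally show False by simp
qed

lemma aux_ineq:
  fixes P Q m t X V Y W :: real
  assumes "P \<le> Q" "P = m + 2*t*X + t^2*V" "Q = m + 2*t*m*Y + t^2*m*W" "W = m*Y - X"
  shows "0 \<le> t*(2*W) + t^2*(m*W - V)"
proof -
  have "t*(2*W) + t^2*(m*W - V) = Q - P" unfolding assms(2,3) assms(4) by (simp add: algebra_simps)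
  then show ?thesis using assms(1) by simp
qed

lemma spectral:
  fixes A :: "real^'n^'m" and c :: real
  assumes A0: "A \<noteq> 0" and c0: "c > 0"
  defines "T \<equiv> \<lambda>y. y - c *\<^sub>R (A *v (transpose A *v y))"
  shows "\<exists>s. s \<ge> 0 \<and> (\<exists>\<sigma>\<in>nonzero_singular_values A. \<bar>1 - c*\<sigma>\<^sup>2\<bar> = s) \<and>
             (\<forall>y\<in>range ((*v) A). norm (T y) \<le> s * norm y)"
proof -
  let ?R = "range ((*v) A)"
  have linT: "linear T" unfolding T_def
    by (rule linearI) (simp_all add: vec.add vec.diff matrix_vector_mult_scaleR algebra_simps)
  have Tadd: "T (y + z) = T y + T z" "T (a *\<^sub>R y) = a *\<^sub>R T y" "T (y - z) = T y - T z" for y z a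
    using linT by (simp_all add: linear_add linear_scale linear_diff)
  have subR: "subspace ?R" using linear_subspace_image[OF matrix_vector_mul_linear subspace_UNIV] .
  have TR: "T y \<in> ?R" if "y \<in> ?R" for y
  proof -
    obtain x where x: "y = A *v x" using \<open>y \<in> ?R\<close> by blast
    have "T y = A *v (x - c *\<^sub>R (transpose A *v y))"
      unfolding T_def by (simp add: vec.diff matrix_vector_mult_scaleR x)
    then show ?thesis by simp
  qed
  have Tsym: "T y \<bullet> z = y \<bullet> T z" for y z
  proof -
    have "(A *v (transpose A *v y)) \<bullet> z = (transpose A *v y) \<bullet> (transpose A *v z)" by (rule adj)
    also have "\<dots> = (transpose A *v z) \<bullet> (transpose A *v y)" by (rule inner_commute)
    also have "\<dots> = z \<bullet> (A *v (transpose A *v y))" 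
      using adj[of "transpose A" z "transpose A *v y"] by (simp only: transpose_transpose)
    finally have e: "(A *v (transpose A *v y)) \<bullet> z = z \<bullet> (A *v (transpose A *v y))" .
    have e2: "(A *v (transpose A *v y)) \<bullet> z = y \<bullet> (A *v (transpose A *v z))"
      using adj[of "transpose A" y "transpose A *v z"] adj[of A "transpose A *v y" z] by (simp only: transpose_transpose)
    show ?thesis unfolding T_def by (simp only: inner_diff_left inner_diff_right inner_scaleR_left inner_scaleR_right e2)
  qed
  obtain i j where ij: "A $ i $ j \<noteq> 0" using A0 by (metis vec_eq_iff zero_index)
  define y1 where "y1 = A *v axis j 1"
  have "y1 $ i = A $ i $ j"
    unfolding y1_def matrix_vector_mult_basis column_def by simp
  then have y1: "y1 \<noteq> 0" "y1 \<in> ?R" using ij y1_def by auto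
  let ?S = "?R \<inter> sphere 0 1"
  have cS: "compact ?S"
    by (intro closed_Int_compact closed_subspace subR compact_sphere)
  have "(1 / norm y1) *\<^sub>R y1 \<in> ?S" using y1 subspace_scale[OF subR] by simp
  then have neS: "?S \<noteq> {}" by blast
  have contT: "continuous_on ?S T"
    using linT by (simp add: linear_continuous_on linear_conv_bounded_linear)
  have "continuous_on ?S (\<lambda>y. T y \<bullet> T y)"
    by (intro continuous_intros contT)
  then obtain y0 where y0: "y0 \<in> ?S" "\<forall>y\<in>?S. T y \<bullet> T y \<le> T y0 \<bullet> T y0"
    using continuous_attains_sup[OF cS neS] by blast
  define \<mu> where "\<mu> = T y0 \<bullet> T y0"
  have bound: "T y \<bullet> T y \<le> \<mu> * (y \<bullet> y)" if "y \<in> ?R" for y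
  proof (cases "y = 0")
    case True then show ?thesis using Tadd(2)[of 0 0] by simp
  next
    case False
    have "(1 / norm y) *\<^sub>R y \<in> ?S" using that False subspace_scale[OF subR] by simp
    then have "T ((1 / norm y) *\<^sub>R y) \<bullet> T ((1 / norm y) *\<^sub>R y) \<le> \<mu>" using y0 \<mu>_def by blast
    then have "(T y \<bullet> T y) / (norm y)^2 \<le> \<mu>" by (simp add: Tadd power2_eq_square)
    moreover have "y \<bullet> y = (norm y)^2" by (simp add: power2_norm_eq_inner)
    ultimately show ?thesis using False by (simp add: divide_le_eq mult.commute)
  qed
  have y0n: "y0 \<bullet> y0 = 1" using y0(1) by (simp add: inner_commute norm_eq_1)
  define w where "w = \<mu> *\<^sub>R y0 - T (T y0)"
  have wR: "w \<in> ?R" unfolding w_def using y0(1) TR subspace_scale[OF subR] subspace_diff[OF subR] by auto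
  have "\<forall>t. 0 \<le> t * (2 * (w \<bullet> w)) + t^2 * (\<mu> * (w \<bullet> w) - T w \<bullet> T w)"
  proof
    fix t :: real
    have "y0 + t *\<^sub>R w \<in> ?R" using wR y0(1) subspace_scale[OF subR] subspace_add[OF subR] by auto
    then have b: "T (y0 + t *\<^sub>R w) \<bullet> T (y0 + t *\<^sub>R w) \<le> \<mu> * ((y0 + t *\<^sub>R w) \<bullet> (y0 + t *\<^sub>R w))"
      by (rule bound)
    have e1: "T y0 \<bullet> T w = T (T y0) \<bullet> w" using Tsym[of "T y0" w] by simp
    have e2: "T w \<bullet> T y0 = T y0 \<bullet> T w" "w \<bullet> y0 = y0 \<bullet> w" by (simp_all add: inner_commute)
    have "T (y0 + t *\<^sub>R w) \<bullet> T (y0 + t *\<^sub>R w) = \<mu> + 2 * t * (T (T y0) \<bullet> w) + t^2 * (T w \<bullet> T w)"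
      unfolding \<mu>_def Tadd by (simp only: inner_add_left inner_add_right inner_scaleR_left inner_scaleR_right e2 e1) (simp add: power2_eq_square algebra_simps)
    moreover have "\<mu> * ((y0 + t *\<^sub>R w) \<bullet> (y0 + t *\<^sub>R w)) = \<mu> + 2 * t * \<mu> * (y0 \<bullet> w) + t^2 * \<mu> * (w \<bullet> w)"
      by (simp only: inner_add_left inner_add_right inner_scaleR_left inner_scaleR_right e2 y0n) (simp add: power2_eq_square algebra_simps)
    moreover have "w \<bullet> w = \<mu> * (y0 \<bullet> w) - T (T y0) \<bullet> w"
      unfolding w_def by (simp add: inner_diff_left)
    ultimately show "0 \<le> t * (2 * (w \<bullet> w)) + t^2 * (\<mu> * (w \<bullet> w) - T w \<bullet> T w)"
      by (rule aux_ineq[OF b])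
  qed
  then have "w \<bullet> w = 0" using quad0 by fastforce
  then have TT: "T (T y0) = \<mu> *\<^sub>R y0" unfolding w_def by simp
  have mu0: "\<mu> \<ge> 0" unfolding \<mu>_def by simp
  define s where "s = sqrt \<mu>"
  have s0: "s \<ge> 0" and ss: "s * s = \<mu>" using mu0 unfolding s_def by (simp_all add: real_sqrt_mult_self)
  obtain v l where v: "v \<in> ?R" "v \<noteq> 0" "T v = l *\<^sub>R v" "\<bar>l\<bar> = s"
  proof (cases "T y0 + s *\<^sub>R y0 = 0")
    case True
    then have "T y0 = (- s) *\<^sub>R y0" by (simp add: eq_neg_iff_add_eq_0)
    moreover have "y0 \<noteq> 0" using y0(1) by auto
    ultimately show ?thesis using that[of y0 "-s"] y0(1) s0 by auto
  next
    case False
    have "T (T y0 + s *\<^sub>R y0) = s *\<^sub>R (T y0 + s *\<^sub>R y0)"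
      by (simp add: Tadd TT ss[symmetric] algebra_simps)
    moreover have "T y0 + s *\<^sub>R y0 \<in> ?R"
      using y0(1) TR subspace_scale[OF subR] subspace_add[OF subR] by auto
    ultimately show ?thesis using that[of "T y0 + s *\<^sub>R y0" s] False s0 by auto
  qed
  define t where "t = (1 - l) / c"
  have AAv: "A *v (transpose A *v v) = t *\<^sub>R v"
  proof -
    have "c *\<^sub>R (A *v (transpose A *v v)) = (1 - l) *\<^sub>R v" using v(3) unfolding T_def
      by (simp add: algebra_simps)
    then have "(1/c) *\<^sub>R (c *\<^sub>R (A *v (transpose A *v v))) = (1/c) *\<^sub>R ((1 - l) *\<^sub>R v)" by simp
    then show ?thesis unfolding t_def using c0 by simp
  qed
  define z where "z = transpose A *v v"
  have zz: "z \<bullet> z = t * (v \<bullet> v)"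
  proof -
    have "z \<bullet> z = v \<bullet> (transpose (transpose A) *v z)"
      unfolding z_def by (rule adj)
    also have "\<dots> = v \<bullet> (t *\<^sub>R v)" by (simp only: transpose_transpose z_def AAv)
    finally show ?thesis by simp
  qed
  have z0: "z \<noteq> 0"
  proof
    assume "z = 0"
    obtain x where x: "v = A *v x" using v(1) by blast
    have "v \<bullet> v = x \<bullet> z" unfolding z_def using adj[of A x v] x by simp
    then show False using \<open>z = 0\<close> v(2) by simp
  qed
  have tpos: "t > 0"
  proof -
    have "z \<bullet> z > 0" "v \<bullet> v > 0" using z0 v(2) by simp_all
    then show ?thesis using zz by (simp add: zero_less_mult_iff)
  qed
  define \<sigma> where "\<sigma> = sqrt t"
  have \<sigma>: "\<sigma> > 0" "\<sigma>\<^sup>2 = t" using tpos unfolding \<sigma>_def by simp_all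
  have "(transpose A ** A) *v z = t *\<^sub>R z"
    unfolding z_def by (simp only: matrix_vector_mul_assoc[symmetric] AAv matrix_vector_mult_scaleR)
  then have sig_in: "\<sigma> \<in> nonzero_singular_values A"
    unfolding nonzero_singular_values_def mat_eigenvalue_def using \<sigma> z0 by auto
  have sig_eq: "\<bar>1 - c * \<sigma>\<^sup>2\<bar> = s" using \<sigma>(2) v(4) c0 unfolding t_def by simp
  have bnd: "\<forall>y\<in>?R. norm (T y) \<le> s * norm y"
  proof
    fix y assume "y \<in> ?R"
    have n1: "(norm (T y))^2 = T y \<bullet> T y" "(norm y)^2 = y \<bullet> y" by (simp_all add: power2_norm_eq_inner)
    have n2: "(s * norm y)^2 = \<mu> * (norm y)^2" by (simp add: power_mult_distrib ss[symmetric] power2_eq_square)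
    have "(norm (T y))^2 \<le> (s * norm y)^2"
      unfolding n2 n1 using bound[OF \<open>y \<in> ?R\<close>] .
    then show "norm (T y) \<le> s * norm y" by (rule power2_le_imp_le) (simp add: s0)
  qed
  show ?thesis
  proof (rule exI[of _ s], intro conjI)
    show "s \<ge> 0" by (rule s0)
    show "\<exists>\<sigma>\<in>nonzero_singular_values A. \<bar>1 - c*\<sigma>\<^sup>2\<bar> = s" using sig_in sig_eq by (rule bexI[rotated])
    show "\<forall>y\<in>?R. norm (T y) \<le> s * norm y" by (rule bnd)
  qed
qed


lemma part_finite: "is_partition (P :: ('a::finite) set set) \<Longrightarrow> finite P"
  by (rule finite_subset[of P "Pow UNIV"]) auto

lemma part_sum:
  fixes P :: "('a::finite) set set" and f :: "'a \<Rightarrow> 'b::comm_monoid_add"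
  assumes "is_partition P"
  shows "(\<Sum>I\<in>P. \<Sum>i\<in>I. f i) = (\<Sum>i\<in>UNIV. f i)"
proof -
  have "sum f (\<Union>P) = sum (sum f) P"
    using sum.Union_disjoint[of P f] assms by (auto simp: is_partition_def)
  then show ?thesis using assms by (simp add: is_partition_def)
qed

lemma part_delta:
  fixes P :: "('a::finite) set set"
  assumes "is_partition P"
  shows "(\<Sum>J\<in>P. (if j \<in> J then X else (0::'b::comm_monoid_add))) = X"
proof -
  have "(\<Sum>J\<in>P. (if j \<in> J then X else 0)) = (\<Sum>J\<in>P. \<Sum>j'\<in>J. (if j' = j then X else 0))"
    by (intro sum.cong refl) (simp add: sum.delta')
  also have "\<dots> = (\<Sum>j'\<in>UNIV. (if j' = j then X else 0))" by (rule part_sum[OF assms])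
  also have "\<dots> = X" by (simp add: sum.delta')
  finally show ?thesis .
qed

lemma frob_total:
  fixes A :: "real^'n::finite^'m::finite"
  assumes R: "is_partition Rows" and C: "is_partition Cols"
  shows "(\<Sum>p\<in>Rows \<times> Cols. frob_sq_block A (fst p) (snd p)) = frob_sq A"
proof -
  have "(\<Sum>p\<in>Rows \<times> Cols. frob_sq_block A (fst p) (snd p)) = (\<Sum>I\<in>Rows. \<Sum>J\<in>Cols. frob_sq_block A I J)"
    by (simp add: sum.cartesian_product split_beta)
  also have "\<dots> = (\<Sum>I\<in>Rows. \<Sum>i\<in>I. \<Sum>J\<in>Cols. \<Sum>j\<in>J. (A $ i $ j)\<^sup>2)"
    unfolding frob_sq_block_def by (intro sum.cong refl) (rule sum.swap)
  also have "\<dots> = (\<Sum>i\<in>UNIV. \<Sum>j\<in>UNIV. (A $ i $ j)\<^sup>2)"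
    by (simp add: part_sum[OF C] part_sum[OF R])
  finally show ?thesis by (simp add: frob_sq_def frob_sq_block_def)
qed

lemma frob_pos:
  fixes A :: "real^'n::finite^'m::finite"
  assumes "A \<noteq> 0" shows "frob_sq A > 0"
proof -
  obtain i j where ij: "A $ i $ j \<noteq> 0" using assms by (metis vec_eq_iff zero_index)
  have "0 < (A $ i $ j)\<^sup>2" using ij by simp
  also have "\<dots> \<le> (\<Sum>j\<in>UNIV. (A $ i $ j)\<^sup>2)"
    by (rule member_le_sum) auto
  also have "\<dots> \<le> (\<Sum>i\<in>UNIV. \<Sum>j\<in>UNIV. (A $ i $ j)\<^sup>2)"
    by (rule member_le_sum[where f="\<lambda>i. \<Sum>j\<in>UNIV. (A $ i $ j)\<^sup>2"]) (auto intro: sum_nonneg)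
  finally show ?thesis by (simp add: frob_sq_def frob_sq_block_def)
qed

lemma prob_sum:
  fixes A :: "real^'n::finite^'m::finite"
  assumes "A \<noteq> 0" "is_partition Rows" "is_partition Cols"
  shows "(\<Sum>p\<in>Rows \<times> Cols. block_prob A p) = 1"
  using frob_total[OF assms(2,3), of A] frob_pos[OF assms(1)]
  unfolding block_prob_def by (simp add: sum_divide_distrib[symmetric])

lemma step_avg:
  fixes A :: "real^'n::finite^'m::finite"
  assumes A0: "A \<noteq> 0" and R: "is_partition Rows" and C: "is_partition Cols"
  shows "(\<Sum>p\<in>Rows \<times> Cols. block_prob A p *\<^sub>R dsbgs_step \<alpha> A b x p)
       = x - (\<alpha> / frob_sq A) *\<^sub>R (transpose A *v (A *v x - b))"
proof -
  define r where "r = A *v x - b"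
  define v where "v p = (\<chi> j. if j \<in> snd p then (\<Sum>i\<in>fst p. A $ i $ j * r $ i) else 0)" for p :: "'m set \<times> 'n set"
  have fR: "finite Rows" "finite Cols" using R C part_finite by auto
  have trm: "block_prob A p *\<^sub>R dsbgs_step \<alpha> A b x p = block_prob A p *\<^sub>R x - (\<alpha> / frob_sq A) *\<^sub>R v p" for p
  proof (cases "frob_sq_block A (fst p) (snd p) = 0")
    case True
    then have "\<forall>i\<in>fst p. \<forall>j\<in>snd p. A $ i $ j = 0"
      unfolding frob_sq_block_def
      by (simp add: sum_nonneg_eq_0_iff sum_nonneg)
    then have "v p = 0" unfolding v_def by (simp add: vec_eq_iff)
    then show ?thesis using True unfolding dsbgs_step_def block_prob_def Let_def r_def v_def by simp
  next
    case False
    have "block_prob A p *\<^sub>R dsbgs_step \<alpha> A b x p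
        = block_prob A p *\<^sub>R x - (block_prob A p * (\<alpha> / frob_sq_block A (fst p) (snd p))) *\<^sub>R v p"
      unfolding dsbgs_step_def Let_def v_def r_def by (simp add: algebra_simps)
    also have "block_prob A p * (\<alpha> / frob_sq_block A (fst p) (snd p)) = \<alpha> / frob_sq A"
      unfolding block_prob_def using False by simp
    finally show ?thesis .
  qed
  have vsum: "(\<Sum>p\<in>Rows \<times> Cols. v p) = transpose A *v r"
  proof -
    have "(\<Sum>p\<in>Rows \<times> Cols. v p) $ j = (transpose A *v r) $ j" for j
    proof -
      have "(\<Sum>p\<in>Rows \<times> Cols. v p) $ j = (\<Sum>p\<in>Rows \<times> Cols. v p $ j)" by (rule sum_component)
      also have "\<dots> = (\<Sum>I\<in>Rows. \<Sum>J\<in>Cols. (if j \<in> J then (\<Sum>i\<in>I. A $ i $ j * r $ i) else 0))"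
        unfolding v_def by (simp add: sum.cartesian_product split_beta)
      also have "\<dots> = (\<Sum>I\<in>Rows. \<Sum>i\<in>I. A $ i $ j * r $ i)"
        by (simp add: part_delta[OF C])
      also have "\<dots> = (\<Sum>i\<in>UNIV. A $ i $ j * r $ i)" by (rule part_sum[OF R])
      finally show ?thesis by (simp add: matrix_vector_mult_def transpose_def)
    qed
    then show ?thesis by (simp add: vec_eq_iff)
  qed
  have "(\<Sum>p\<in>Rows \<times> Cols. block_prob A p *\<^sub>R dsbgs_step \<alpha> A b x p)
      = (\<Sum>p\<in>Rows \<times> Cols. block_prob A p) *\<^sub>R x - (\<alpha> / frob_sq A) *\<^sub>R (\<Sum>p\<in>Rows \<times> Cols. v p)"
    by (simp add: trm sum_subtractf scaleR_sum_right scaleR_sum_left)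
  also have "\<dots> = x - (\<alpha> / frob_sq A) *\<^sub>R (transpose A *v (A *v x - b))"
    using prob_sum[OF A0 R C] vsum r_def by simp
  finally show ?thesis .
qed


lemma seqs_Suc:
  "{ss. set ss \<subseteq> P \<and> length ss = Suc k} = (\<lambda>(ss,p). ss @ [p]) ` ({ss. set ss \<subseteq> P \<and> length ss = k} \<times> P)"
proof
  show "{ss. set ss \<subseteq> P \<and> length ss = Suc k} \<subseteq> (\<lambda>(ss,p). ss @ [p]) ` ({ss. set ss \<subseteq> P \<and> length ss = k} \<times> P)"
  proof
    fix ss assume "ss \<in> {ss. set ss \<subseteq> P \<and> length ss = Suc k}"
    then obtain ys y where "ss = ys @ [y]" "length ys = k" "set ss \<subseteq> P"
      by (auto simp: length_Suc_conv_rev)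
    then show "ss \<in> (\<lambda>(ss,p). ss @ [p]) ` ({ss. set ss \<subseteq> P \<and> length ss = k} \<times> P)"
      by (intro image_eqI[of _ _ "(ys, y)"]) auto
  qed
qed auto

lemma seqs_inj: "inj_on (\<lambda>(ss,p). ss @ [p]) X"
  by (rule inj_onI) auto

lemma sum_seqs_Suc:
  assumes "finite P"
  shows "(\<Sum>ss\<in>{ss. set ss \<subseteq> P \<and> length ss = Suc k}. h ss)
       = (\<Sum>ss\<in>{ss. set ss \<subseteq> P \<and> length ss = k}. \<Sum>p\<in>P. h (ss @ [p]))"
  unfolding seqs_Suc sum.reindex[OF seqs_inj] by (simp add: sum.cartesian_product split_beta comp_def)

lemma weights_one:
  fixes A :: "real^'n::finite^'m::finite"
  assumes "A \<noteq> 0" and fP: "finite P" and one: "(\<Sum>p\<in>P. block_prob A p) = 1"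
  shows "(\<Sum>ss\<in>{ss. set ss \<subseteq> P \<and> length ss = k}. (\<Prod>p\<leftarrow>ss. block_prob A p)) = 1"
proof (induction k)
  case 0
  have "{ss. set ss \<subseteq> P \<and> length ss = 0} = {[]}" by auto
  then show ?case by simp
next
  case (Suc k)
  have "(\<Sum>ss\<in>{ss. set ss \<subseteq> P \<and> length ss = Suc k}. (\<Prod>p\<leftarrow>ss. block_prob A p))
      = (\<Sum>ss\<in>{ss. set ss \<subseteq> P \<and> length ss = k}. (\<Prod>p\<leftarrow>ss. block_prob A p) * (\<Sum>p\<in>P. block_prob A p))"
    unfolding sum_seqs_Suc[OF fP] by (simp add: sum_distrib_left)
  then show ?case using Suc one by simp
qed

lemma affine_avg:
  fixes A :: "real^'n::finite^'m::finite"
  assumes "finite S" "sum w S = 1"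
  shows "(\<Sum>s\<in>S. w s *\<^sub>R (x s - c *\<^sub>R (transpose A *v (A *v x s - b))))
       = (\<Sum>s\<in>S. w s *\<^sub>R x s) - c *\<^sub>R (transpose A *v (A *v (\<Sum>s\<in>S. w s *\<^sub>R x s) - b))"
proof -
  have "(\<Sum>s\<in>S. w s *\<^sub>R (x s - c *\<^sub>R (transpose A *v (A *v x s - b))))
      = (\<Sum>s\<in>S. w s *\<^sub>R x s) - c *\<^sub>R (\<Sum>s\<in>S. transpose A *v (A *v (w s *\<^sub>R x s))) + (c * sum w S) *\<^sub>R (transpose A *v b)"
    by (simp add: algebra_simps vec.diff vec.scale sum.distrib sum_subtractf scaleR_sum_right scaleR_sum_left sum_distrib_left)
  also have "\<dots> = (\<Sum>s\<in>S. w s *\<^sub>R x s) - c *\<^sub>R (transpose A *v (A *v (\<Sum>s\<in>S. w s *\<^sub>R x s) - b))"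
    using assms(2) by (simp add: vec.sum vec.diff algebra_simps)
  finally show ?thesis .
qed


theorem theorem2:
  fixes A :: "real^'n::finite^'m::finite" and b :: "real^'m" and x0 xs :: "real^'n"
    and Rows :: "'m set set" and Cols :: "'n set set" and \<alpha> :: real and k :: nat
  assumes "A \<noteq> 0"
    and "is_partition Rows" and "is_partition Cols"
    and "\<alpha> > 0"
    and "transpose A ** A *v xs = transpose A *v b"
  shows "norm (A *v dsbgs_expect Rows Cols \<alpha> A b x0 k - A *v xs)
         \<le> (Max ((\<lambda>\<sigma>. \<bar>1 - \<alpha> * \<sigma>\<^sup>2 / frob_sq A\<bar>) ` nonzero_singular_values A)) ^ k
            * norm (A *v x0 - A *v xs)"
proof -
  define F where "F = frob_sq A"
  define c where "c = \<alpha> / F"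
  have F0: "F > 0" using frob_pos[OF assms(1)] F_def by simp
  have c0: "c > 0" using assms(4) F0 c_def by simp
  let ?P = "Rows \<times> Cols"
  have fP: "finite ?P" using part_finite assms(2,3) by auto
  have one: "(\<Sum>p\<in>?P. block_prob A p) = 1" by (rule prob_sum[OF assms(1-3)])
  define E where "E k = dsbgs_expect Rows Cols \<alpha> A b x0 k" for k
  have E0: "E 0 = x0"
  proof -
    have "{ss. set ss \<subseteq> ?P \<and> length ss = 0} = {[]}" by auto
    then show ?thesis by (simp add: E_def dsbgs_expect_def dsbgs_iter_def)
  qed
  have ESuc: "E (Suc k) = E k - c *\<^sub>R (transpose A *v (A *v E k - b))" for k
  proof -
    let ?L = "{ss. set ss \<subseteq> ?P \<and> length ss = k}"
    let ?w = "\<lambda>ss. \<Prod>p\<leftarrow>ss. block_prob A p"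
    let ?it = "dsbgs_iter \<alpha> A b x0"
    have "E (Suc k) = (\<Sum>ss\<in>?L. \<Sum>p\<in>?P. (?w (ss@[p])) *\<^sub>R ?it (ss@[p]))"
      unfolding E_def dsbgs_expect_def sum_seqs_Suc[OF fP] ..
    also have "\<dots> = (\<Sum>ss\<in>?L. ?w ss *\<^sub>R (\<Sum>p\<in>?P. block_prob A p *\<^sub>R dsbgs_step \<alpha> A b (?it ss) p))"
      by (simp add: dsbgs_iter_def scaleR_sum_right)
    also have "\<dots> = (\<Sum>ss\<in>?L. ?w ss *\<^sub>R (?it ss - c *\<^sub>R (transpose A *v (A *v ?it ss - b))))"
      by (simp only: step_avg[OF assms(1-3)] c_def F_def)
    also have "\<dots> = E k - c *\<^sub>R (transpose A *v (A *v E k - b))"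
      unfolding E_def dsbgs_expect_def
      by (rule affine_avg[OF _ weights_one[OF assms(1) fP one]]) (simp add: finite_lists_length_eq fP)
    finally show ?thesis .
  qed
  define e where "e k = A *v E k - A *v xs" for k
  define T where "T = (\<lambda>y. y - c *\<^sub>R (A *v (transpose A *v y)))"
  obtain s where s0: "s \<ge> 0" and sig: "\<exists>\<sigma>\<in>nonzero_singular_values A. \<bar>1 - c*\<sigma>\<^sup>2\<bar> = s"
      and sb: "\<forall>y\<in>range ((*v) A). norm (T y) \<le> s * norm y"
    using spectral[OF assms(1) c0] unfolding T_def by blast
  have ab: "transpose A *v b = transpose A *v (A *v xs)"
    using assms(5) by (simp only: matrix_vector_mul_assoc)
  have eSuc: "e (Suc k) = T (e k)" for k
  proof -
    have h: "transpose A *v (A *v E k - b) = transpose A *v (e k)"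
      unfolding e_def vec.diff ab ..
    have "e (Suc k) = A *v (E k - c *\<^sub>R (transpose A *v (e k))) - A *v xs"
      unfolding e_def ESuc h ..
    also have "\<dots> = T (e k)"
      unfolding T_def e_def by (simp only: vec.diff matrix_vector_mult_scaleR) (simp add: algebra_simps)
    finally show ?thesis .
  qed
  have eR: "e k \<in> range ((*v) A)" for k
    unfolding e_def vec.diff[symmetric] by simp
  have ebound: "norm (e k) \<le> s ^ k * norm (e 0)" for k
  proof (induction k)
    case 0 then show ?case by simp
  next
    case (Suc k)
    have "norm (e (Suc k)) \<le> s * norm (e k)" unfolding eSuc using sb eR by blast
    also have "\<dots> \<le> s * (s ^ k * norm (e 0))" using Suc s0 by (simp add: mult_left_mono)
    finally show ?case by (simp add: mult.assoc)
  qed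
  have fin: "finite (nonzero_singular_values A)"
  proof (rule finite_subset)
    show "nonzero_singular_values A \<subseteq> sqrt ` {c. mat_eigenvalue (transpose A ** A) c}"
    proof
      fix \<sigma> assume h: "\<sigma> \<in> nonzero_singular_values A"
      then have "\<sigma> = sqrt (\<sigma>\<^sup>2)" "\<sigma>\<^sup>2 \<in> {c. mat_eigenvalue (transpose A ** A) c}"
        unfolding nonzero_singular_values_def by auto
      then show "\<sigma> \<in> sqrt ` {c. mat_eigenvalue (transpose A ** A) c}" by (rule image_eqI)
    qed
    show "finite (sqrt ` {c. mat_eigenvalue (transpose A ** A) c})"
      by (rule finite_imageI[OF eig_finite])
  qed
  let ?f = "\<lambda>\<sigma>. \<bar>1 - \<alpha> * \<sigma>\<^sup>2 / frob_sq A\<bar>"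
  have fe: "?f \<sigma> = \<bar>1 - c*\<sigma>\<^sup>2\<bar>" for \<sigma> unfolding c_def F_def by simp
  obtain \<sigma> where \<sigma>: "\<sigma> \<in> nonzero_singular_values A" "\<bar>1 - c*\<sigma>\<^sup>2\<bar> = s" using sig by blast
  have sM: "s \<le> Max (?f ` nonzero_singular_values A)"
  proof -
    have "?f \<sigma> \<le> Max (?f ` nonzero_singular_values A)"
      by (rule Max_ge[OF finite_imageI[OF fin]]) (rule imageI[OF \<sigma>(1)])
    then show ?thesis using fe[of \<sigma>] \<sigma>(2) by simp
  qed
  have "norm (e k) \<le> s ^ k * norm (e 0)" by (rule ebound)
  also have "\<dots> \<le> (Max (?f ` nonzero_singular_values A)) ^ k * norm (e 0)"
    by (intro mult_right_mono power_mono sM s0 norm_ge_zero)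
  finally show ?thesis unfolding e_def E_def E0[unfolded E_def] .
qed

end
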